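(* Assume the hypotheses of the existence theorem stated in the context, let $\alpha=\max\{\|H(X)\|:X\in N_\varepsilon(\mathcal P)\}$, and fix $\mu\ge\dfrac{\Lambda+(L_0+L_1)\alpha}{1-C_0-C_1}$. Let $\delta>0$ and let $W=(w_1,\dots,w_n)\in C^1([-\delta,\delta];\mathbb R^n)$ with $w_1([-\delta,\delta])\subseteq[-\delta,\delta]$ satisfy $W'(t)=H(t;W(t),W(w_1(t));W'(t),W'(w_1(t)))$ for $|t|\le\delta$, $W(0)=0$, $W'(0)=P$, and $(t;W(t),W(w_1(t));W'(t),W'(w_1(t)))\in N_\varepsilon(\mathcal P)$ for $|t|\le\delta$. Then $W\in\mathcal C(\delta)$.
   Context: Setting (existence theorem hypotheses): $\|\cdot\|$ is a norm on $\mathbb R^n$; $H=(h_1,\dots,h_n)$ is continuous from an open subset of $\mathbb R^{4n+1}$ to $\mathbb R^n$, written $H(t;\zeta^0,\zeta^1;\xi^0,\xi^1)$; $P=(p_1,\dots,p_n)$ satisfies $P=H(0;\mathbf0,\mathbf0;P,P)$ and $|p_1|\le1$; $\mathcal P=(0;\mathbf0,\mathbf0;P,P)$; $N_\varepsilon(\mathcal P)=\{|t|+\|\zeta^0\|+\|\zeta^1\|+\|\xi^0-P\|+\|\xi^1-P\|\le\varepsilon\}$ lies in the domain, and on it: $H$ is $\Lambda$-Lipschitz in $t$; $\|H(t;\bar\zeta^0,\bar\zeta^1;\xi^0,\xi^1)-H(t;\zeta^0,\zeta^1;\xi^0,\xi^1)\|\le L_0\|\bar\zeta^0-\zeta^0\|+L_1\|\bar\zeta^1-\zeta^1\|$;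 $\|H(t;\zeta^0,\zeta^1;\bar\xi^0,\bar\xi^1)-H(t;\zeta^0,\zeta^1;\xi^0,\xi^1)\|\le C_0\|\bar\xi^0-\xi^0\|+C_1\|\bar\xi^1-\xi^1\|$ with $C_0+C_1<1$; and $|h_1|\le1$. For $Z=(z_1,\dots,z_n)$ let $V_Z(t)=(t;Z(t),Z(z_1(t));Z'(t),Z'(z_1(t)))$. The set $\mathcal C(\delta)$ consists of all $Z\in C^1([-\delta,\delta];\mathbb R^n)$ such that: $Z(0)=0$, $Z'(0)=P$; $|z_1(t)|\le|t|$; $\|Z(t)-Z(\bar t)\|\le\alpha|t-\bar t|$; $|z_1(t)-z_1(\bar t)|\le|t-\bar t|$; $\|Z'(t)-Z'(\bar t)\|\le\mu|t-\bar t|$; and $V_Z(t)\in N_\varepsilon(\mathcal P)$, for all $t,\bar t\in[-\delta,\delta]$. *)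

theory Defs
  imports "HOL-Analysis.Analysis"
begin

text \<open>Vectors in R^n are modelled as real^'n ('n a finite index type); the distinguished
coordinate i1 plays the role of the first coordinate.\<close>

definition is_norm :: "('a::real_vector \<Rightarrow> real) \<Rightarrow> bool" where
  "is_norm nrm \<longleftrightarrow>
     (\<forall>x. 0 \<le> nrm x) \<and> (\<forall>x. nrm x = 0 \<longleftrightarrow> x = 0) \<and>
     (\<forall>c x. nrm (c *\<^sub>R x) = \<bar>c\<bar> * nrm x) \<and>
     (\<forall>x y. nrm (x + y) \<le> nrm x + nrm y)"

definition Nbhd ::
  "('a::real_vector \<Rightarrow> real) \<Rightarrow> 'a \<Rightarrow> real \<Rightarrow> (real \<times> 'a \<times> 'a \<times> 'a \<times> 'a) set" where
  "Nbhd nrm P eps = {(t, z0, z1, x0, x1).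
      \<bar>t\<bar> + nrm z0 + nrm z1 + nrm (x0 - P) + nrm (x1 - P) \<le> eps}"

definition C1_on :: "real \<Rightarrow> (real \<Rightarrow> 'a::real_normed_vector) \<Rightarrow> (real \<Rightarrow> 'a) \<Rightarrow> bool" where
  "C1_on delta Z Z' \<longleftrightarrow>
     (\<forall>t\<in>{-delta..delta}. (Z has_vector_derivative Z' t) (at t within {-delta..delta})) \<and>
     continuous_on {-delta..delta} Z'"

definition classC ::
  "(real^'n \<Rightarrow> real) \<Rightarrow> real^'n \<Rightarrow> real \<Rightarrow> real \<Rightarrow> real \<Rightarrow> 'n \<Rightarrow> real
    \<Rightarrow> (real \<Rightarrow> real^'n) \<Rightarrow> bool" where
  "classC nrm P eps alpha mu i1 delta Z \<longleftrightarrow>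
     (\<exists>Z'. C1_on delta Z Z' \<and>
        Z 0 = 0 \<and> Z' 0 = P \<and>
        (\<forall>t\<in>{-delta..delta}. \<bar>Z t $ i1\<bar> \<le> \<bar>t\<bar>) \<and>
        (\<forall>t\<in>{-delta..delta}. \<forall>s\<in>{-delta..delta}. nrm (Z t - Z s) \<le> alpha * \<bar>t - s\<bar>) \<and>
        (\<forall>t\<in>{-delta..delta}. \<forall>s\<in>{-delta..delta}. \<bar>Z t $ i1 - Z s $ i1\<bar> \<le> \<bar>t - s\<bar>) \<and>
        (\<forall>t\<in>{-delta..delta}. \<forall>s\<in>{-delta..delta}. nrm (Z' t - Z' s) \<le> mu * \<bar>t - s\<bar>) \<and>
        (\<forall>t\<in>{-delta..delta}.
           (t, Z t, Z (Z t $ i1), Z' t, Z' (Z t $ i1)) \<in> Nbhd nrm P eps))"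

end

theory Submission
  imports Defs
begin

lemma nrm_basic:
  assumes "is_norm nrm"
  shows "nrm 0 = 0" "nrm (- x) = nrm x" "nrm (x - y) = nrm (y - x)"
    "nrm (x + y) \<le> nrm x + nrm y" "nrm (c *\<^sub>R x) = \<bar>c\<bar> * nrm x" "0 \<le> nrm x"
    "nrm (x - z) \<le> nrm (x - y) + nrm (y - z)"
proof -
  note a = assms[unfolded is_norm_def]
  show "nrm 0 = 0" using a by auto
  show n: "nrm (- x) = nrm x" using a[THEN conjunct2, THEN conjunct2, THEN conjunct1, rule_format, of "-1" x] by simp
  show "nrm (x - y) = nrm (y - x)" using a[THEN conjunct2, THEN conjunct2, THEN conjunct1, rule_format, of "-1" "x - y"] by simp
  show "nrm (x + y) \<le> nrm x + nrm y" using a by auto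
  show "nrm (c *\<^sub>R x) = \<bar>c\<bar> * nrm x" using a by auto
  show "0 \<le> nrm x" using a by auto
  show "nrm (x - z) \<le> nrm (x - y) + nrm (y - z)"
    using a[THEN conjunct2, THEN conjunct2, THEN conjunct2, rule_format, of "x - y" "y - z"] by simp
qed

lemma nrm_convex:
  assumes "is_norm nrm" "0 \<le> l" "l \<le> 1"
  shows "nrm ((1 - l) *\<^sub>R a + l *\<^sub>R b) \<le> (1 - l) * nrm a + l * nrm b"
proof -
  have "nrm ((1 - l) *\<^sub>R a + l *\<^sub>R b) \<le> nrm ((1 - l) *\<^sub>R a) + nrm (l *\<^sub>R b)"
    by (rule nrm_basic(4)[OF assms(1)])
  also have "\<dots> = (1 - l) * nrm a + l * nrm b"
    using assms(2,3) by (simp add: nrm_basic(5)[OF assms(1)])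
  finally show ?thesis .
qed

lemma nrm_sum:
  assumes "is_norm nrm" "finite S"
  shows "nrm (sum f S) \<le> (\<Sum>i\<in>S. nrm (f i))"
  using assms(2)
proof (induction S rule: finite_induct)
  case empty then show ?case using nrm_basic[OF assms(1)] by simp
next
  case (insert x F)
  then show ?case using nrm_basic(4)[OF assms(1), of "f x" "sum f F"] by simp
qed

lemma nrm_bound:
  fixes nrm :: "real^'n \<Rightarrow> real"
  assumes "is_norm nrm"
  obtains K where "K \<ge> 0" "\<And>x. nrm x \<le> K * norm x"
proof
  let ?K = "\<Sum>i\<in>UNIV. nrm (axis i (1::real))"
  show "?K \<ge> 0" using nrm_basic(6)[OF assms] by (simp add: sum_nonneg)
  fix x :: "real^'n"
  have "nrm x = nrm (\<Sum>i\<in>UNIV. x $ i *\<^sub>R axis i 1)"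
    using basis_expansion[of x] by (simp add: scalar_mult_eq_scaleR)
  also have "\<dots> \<le> (\<Sum>i\<in>UNIV. nrm (x $ i *\<^sub>R axis i 1))" by (rule nrm_sum[OF assms]) simp
  also have "\<dots> = (\<Sum>i\<in>UNIV. \<bar>x $ i\<bar> * nrm (axis i 1))" using nrm_basic(5)[OF assms] by simp
  also have "\<dots> \<le> (\<Sum>i\<in>UNIV. norm x * nrm (axis i 1))"
    by (intro sum_mono mult_right_mono component_le_norm_cart nrm_basic(6)[OF assms])
  also have "\<dots> = ?K * norm x" by (simp add: sum_distrib_left mult.commute)
  finally show "nrm x \<le> ?K * norm x" .
qed

lemma nrm_tendsto:
  fixes nrm :: "real^'n \<Rightarrow> real"
  assumes "is_norm nrm" "(f \<longlongrightarrow> l) F"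
  shows "((\<lambda>x. nrm (f x)) \<longlongrightarrow> nrm l) F"
proof -
  obtain K where K: "K \<ge> 0" "\<And>x. nrm x \<le> K * norm x" using nrm_bound[OF assms(1)] by blast
  have "((\<lambda>x. f x - l) \<longlongrightarrow> 0) F" using tendsto_diff[OF assms(2) tendsto_const, of l] by simp
  moreover have "\<forall>\<^sub>F x in F. norm (nrm (f x) - nrm l) \<le> norm (f x - l) * K"
  proof (intro always_eventually allI)
    fix x
    have "nrm (f x) \<le> nrm (f x - l) + nrm (l - 0)" using nrm_basic(7)[OF assms(1), of "f x" 0 l] by simp
    moreover have "nrm l \<le> nrm (l - f x) + nrm (f x - 0)" using nrm_basic(7)[OF assms(1), of l 0 "f x"] by simp
    ultimately have "\<bar>nrm (f x) - nrm l\<bar> \<le> nrm (f x - l)" using nrm_basic(3)[OF assms(1), of l "f x"] by simp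
    then show "norm (nrm (f x) - nrm l) \<le> norm (f x - l) * K" using K(2)[of "f x - l"] by (simp add: mult.commute)
  qed
  ultimately have "((\<lambda>x. nrm (f x) - nrm l) \<longlongrightarrow> 0) F" by (rule tendsto_0_le)
  then show ?thesis by (simp add: LIM_zero_iff)
qed


lemma nrm_support:
  fixes nrm :: "real^'n \<Rightarrow> real"
  assumes N: "is_norm nrm"
  shows "\<exists>a. (\<forall>x. a \<bullet> x \<le> nrm x) \<and> a \<bullet> v = nrm v"
proof (cases "v = 0")
  case True then show ?thesis using nrm_basic[OF N] by (intro exI[of _ 0]) simp
next
  case False
  have "nrm v \<noteq> 0" using False N unfolding is_norm_def by blast
  then have nv: "nrm v > 0" using nrm_basic(6)[OF N, of v] by simp
  let ?S = "{x. nrm x < nrm v}"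
  have cS: "convex ?S"
    unfolding convex_def
  proof (intro allI impI ballI, simp)
    fix x y :: "real^'n" and u w :: real
    assume h: "nrm x < nrm v" "nrm y < nrm v" "0 \<le> u" "0 \<le> w" "u + w = 1"
    have "nrm (u *\<^sub>R x + w *\<^sub>R y) \<le> u * nrm x + w * nrm y"
      using nrm_convex[OF N, of w x y] h by (simp add: eq_diff_eq[symmetric])
    also have "\<dots> < nrm v"
    proof (cases "u = 0")
      case True then show ?thesis using h by simp
    next
      case False
      then have "u * nrm x < u * nrm v" using h by simp
      moreover have "w * nrm y \<le> w * nrm v" using h by (simp add: mult_left_mono)
      moreover have "u * nrm v + w * nrm v = nrm v" using h(5) by (metis distrib_right mult_1)
      ultimately show ?thesis by linarith
    qed
    finally show "nrm (u *\<^sub>R x + w *\<^sub>R y) < nrm v" .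
  qed
  have "0 \<in> ?S" using nv nrm_basic(1)[OF N] by simp
  then obtain a b where ab: "a \<noteq> 0" "\<forall>x\<in>?S. a \<bullet> x \<le> b" "\<forall>x\<in>{v}. a \<bullet> x \<ge> b"
    using separating_hyperplane_sets[OF cS convex_singleton, of v] by force
  define r where "r = nrm v / (2 * (nrm a + 1))"
  have r: "r > 0" using nv nrm_basic(6)[OF N, of a] by (simp add: r_def)
  have "nrm (r *\<^sub>R a) < nrm v"
  proof -
    have "nrm (r *\<^sub>R a) = r * nrm a" using r nrm_basic(5)[OF N] by simp
    also have "\<dots> < r * (nrm a + 1)" using r by simp
    also have "\<dots> = nrm v / 2" using nrm_basic(6)[OF N, of a] by (simp add: r_def field_simps)
    finally show ?thesis using nv by simp
  qed
  then have "a \<bullet> (r *\<^sub>R a) \<le> b" using ab by auto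
  moreover have "a \<bullet> (r *\<^sub>R a) > 0" using r ab(1) by simp
  ultimately have b: "b > 0" by simp
  have key: "a \<bullet> x \<le> b / nrm v * nrm x" for x
  proof (rule ccontr)
    assume "\<not> ?thesis"
    then have c1: "a \<bullet> x > b / nrm v * nrm x" by simp
    have nx: "nrm x > 0"
    proof (rule ccontr)
      assume "\<not> nrm x > 0"
      then have "nrm x = 0" using nrm_basic(6)[OF N, of x] by simp
      then have "x = 0" using N unfolding is_norm_def by blast
      then show False using c1 nrm_basic(1)[OF N] by simp
    qed
    have ax: "a \<bullet> x > 0" using c1 b nv nx by (smt (verit) divide_pos_pos mult_pos_pos)
    have "b / (a \<bullet> x) < nrm v / nrm x"
      using c1 nx nv ax by (simp add: field_simps)
    then obtain c where c: "b / (a \<bullet> x) < c" "c < nrm v / nrm x" using dense by blast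
    have cpos: "c > 0" using c(1) b ax by (smt (verit) divide_pos_pos)
    have "nrm (c *\<^sub>R x) = c * nrm x" using cpos nrm_basic(5)[OF N] by simp
    also have "\<dots> < nrm v" using c(2) nx by (simp add: field_simps)
    finally have "a \<bullet> (c *\<^sub>R x) \<le> b" using ab by auto
    moreover have "a \<bullet> (c *\<^sub>R x) > b" using c(1) ax by (simp add: field_simps)
    ultimately show False by simp
  qed
  have av: "a \<bullet> v = b" using key[of v] ab(3) nv by simp
  show ?thesis
  proof (intro exI[of _ "(nrm v / b) *\<^sub>R a"] conjI allI)
    fix x
    have "(nrm v / b) * (a \<bullet> x) \<le> (nrm v / b) * (b / nrm v * nrm x)"
      using key[of x] nv b by (intro mult_left_mono) auto
    then show "(nrm v / b) *\<^sub>R a \<bullet> x \<le> nrm x" using nv b by simp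
  next
    show "(nrm v / b) *\<^sub>R a \<bullet> v = nrm v" using av b by simp
  qed
qed

lemma real_mvt_bound:
  fixes f f' :: "real \<Rightarrow> real"
  assumes "\<And>u. u \<in> {a..b} \<Longrightarrow> (f has_vector_derivative f' u) (at u within {a..b})"
    and "\<And>u. u \<in> {a..b} \<Longrightarrow> \<bar>f' u\<bar> \<le> B"
    and "x \<in> {a..b}" "y \<in> {a..b}"
  shows "\<bar>f x - f y\<bar> \<le> B * \<bar>x - y\<bar>"
  using field_differentiable_bound[OF convex_real_interval(5), of a b f f' B x y] assms
  by (simp add: has_real_derivative_iff_has_vector_derivative)

lemma nrm_mvt:
  fixes nrm :: "real^'n \<Rightarrow> real" and W W' :: "real \<Rightarrow> real^'n"
  assumes N: "is_norm nrm"
    and d: "\<And>u. u \<in> {a..b} \<Longrightarrow> (W has_vector_derivative W' u) (at u within {a..b})"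
    and bd: "\<And>u. u \<in> {a..b} \<Longrightarrow> nrm (W' u) \<le> B"
    and "x \<in> {a..b}" "y \<in> {a..b}"
  shows "nrm (W x - W y) \<le> B * \<bar>x - y\<bar>"
proof -
  obtain c where c: "\<forall>z. c \<bullet> z \<le> nrm z" "c \<bullet> (W x - W y) = nrm (W x - W y)"
    using nrm_support[OF N] by blast
  have "\<bar>c \<bullet> W x - c \<bullet> W y\<bar> \<le> B * \<bar>x - y\<bar>"
  proof (rule real_mvt_bound[where f = "\<lambda>u. c \<bullet> W u" and f' = "\<lambda>u. c \<bullet> W' u"])
    fix u assume u: "u \<in> {a..b}"
    show "((\<lambda>u. c \<bullet> W u) has_vector_derivative c \<bullet> W' u) (at u within {a..b})"
      by (rule bounded_linear.has_vector_derivative[OF bounded_linear_inner_right d[OF u]])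
    have "c \<bullet> W' u \<le> B" using c(1) bd[OF u] by (meson order_trans)
    moreover have "- (c \<bullet> W' u) \<le> B" using c(1)[rule_format, of "- W' u"] bd[OF u] nrm_basic(2)[OF N] by simp
    ultimately show "\<bar>c \<bullet> W' u\<bar> \<le> B" by simp
  qed (use assms in auto)
  then show ?thesis using c(2) by (simp add: inner_diff_right)
qed


definition n5 :: "('v::real_vector \<Rightarrow> real) \<Rightarrow> real \<times> 'v \<times> 'v \<times> 'v \<times> 'v \<Rightarrow> real" where
  "n5 nrm V = (case V of (t, a, b, c, d) \<Rightarrow> \<bar>t\<bar> + nrm a + nrm b + nrm c + nrm d)"

definition w5 :: "('v::real_vector \<Rightarrow> real) \<Rightarrow> real \<Rightarrow> real \<Rightarrow> real \<Rightarrow> real \<Rightarrow> real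
    \<Rightarrow> real \<times> 'v \<times> 'v \<times> 'v \<times> 'v \<Rightarrow> real" where
  "w5 nrm La L0 L1 C0 C1 V = (case V of (t, a, b, c, d) \<Rightarrow>
     La * \<bar>t\<bar> + L0 * nrm a + L1 * nrm b + C0 * nrm c + C1 * nrm d)"

definition Pc :: "'v::real_vector \<Rightarrow> real \<times> 'v \<times> 'v \<times> 'v \<times> 'v" where
  "Pc P = (0, 0, 0, P, P)"

definition GG :: "(real \<Rightarrow> 'v \<Rightarrow> 'v \<Rightarrow> 'v \<Rightarrow> 'v \<Rightarrow> 'v) \<Rightarrow> real \<times> 'v \<times> 'v \<times> 'v \<times> 'v \<Rightarrow> 'v" where
  "GG H = (\<lambda>(t, z0, z1, x0, x1). H t z0 z1 x0 x1)"

lemma mem_Nbhd: "X \<in> Nbhd nrm P eps \<longleftrightarrow> n5 nrm (X - Pc P) \<le> eps"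
  by (cases X) (simp add: Nbhd_def n5_def Pc_def)

locale HL =
  fixes nrm :: "real^'n \<Rightarrow> real"
    and H :: "real \<Rightarrow> real^'n \<Rightarrow> real^'n \<Rightarrow> real^'n \<Rightarrow> real^'n \<Rightarrow> real^'n"
    and U :: "(real \<times> (real^'n) \<times> (real^'n) \<times> (real^'n) \<times> (real^'n)) set"
    and P :: "real^'n"
    and eps \<Lambda> L0 L1 C0 C1 :: real
  assumes norm: "is_norm nrm"
    and U_open: "open U"
    and H_cont: "continuous_on U (\<lambda>(t, z0, z1, x0, x1). H t z0 z1 x0 x1)"
    and N_sub: "Nbhd nrm P eps \<subseteq> U"
    and consts_nonneg: "\<Lambda> \<ge> 0" "L0 \<ge> 0" "L1 \<ge> 0" "C0 \<ge> 0" "C1 \<ge> 0"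
    and Lip_t: "\<And>t s z0 z1 x0 x1. (t, z0, z1, x0, x1) \<in> Nbhd nrm P eps \<Longrightarrow>
        (s, z0, z1, x0, x1) \<in> Nbhd nrm P eps \<Longrightarrow>
        nrm (H s z0 z1 x0 x1 - H t z0 z1 x0 x1) \<le> \<Lambda> * \<bar>s - t\<bar>"
    and Lip_z: "\<And>t z0 z1 y0 y1 x0 x1. (t, z0, z1, x0, x1) \<in> Nbhd nrm P eps \<Longrightarrow>
        (t, y0, y1, x0, x1) \<in> Nbhd nrm P eps \<Longrightarrow>
        nrm (H t y0 y1 x0 x1 - H t z0 z1 x0 x1) \<le> L0 * nrm (y0 - z0) + L1 * nrm (y1 - z1)"
    and Lip_x: "\<And>t z0 z1 x0 x1 y0 y1. (t, z0, z1, x0, x1) \<in> Nbhd nrm P eps \<Longrightarrow>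
        (t, z0, z1, y0, y1) \<in> Nbhd nrm P eps \<Longrightarrow>
        nrm (H t z0 z1 y0 y1 - H t z0 z1 x0 x1) \<le> C0 * nrm (y0 - x0) + C1 * nrm (y1 - x1)"
begin

abbreviation "nn \<equiv> n5 nrm"
abbreviation "ww \<equiv> w5 nrm \<Lambda> L0 L1 C0 C1"
abbreviation "G \<equiv> GG H"

lemmas nb = nrm_basic[OF norm]

lemma n5_scale: "nn (c *\<^sub>R V) = \<bar>c\<bar> * nn V"
  by (cases V) (simp add: n5_def nb(5) algebra_simps abs_mult)

lemma w5_scale: "ww (c *\<^sub>R V) = \<bar>c\<bar> * ww V"
  by (cases V) (simp add: w5_def nb(5) algebra_simps abs_mult)

lemma n5_nonneg: "nn V \<ge> 0"
  by (cases V) (simp add: n5_def nb(6) add_nonneg_nonneg)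

lemma w5_nonneg: "ww V \<ge> 0"
  using consts_nonneg by (cases V) (simp add: w5_def nb(6) add_nonneg_nonneg)

lemma n5_add: "nn (V + V') \<le> nn V + nn V'"
proof -
  obtain t a b c d where V: "V = (t, a, b, c, d)" by (cases V) auto
  obtain t' a' b' c' d' where V': "V' = (t', a', b', c', d')" by (cases V') auto
  show ?thesis using nb(4)[of a a'] nb(4)[of b b'] nb(4)[of c c'] nb(4)[of d d'] abs_triangle_ineq[of t t']
    by (simp add: V V' n5_def)
qed

lemma stepB:
  assumes D: "D = \<bar>t' - t\<bar> + nrm (y0 - z0) + nrm (y1 - z1) + nrm (u0 - x0) + nrm (u1 - x1)"
    and hX: "\<bar>t\<bar> + nrm z0 + nrm z1 + nrm (x0 - P) + nrm (x1 - P) + D \<le> eps"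
    and hY: "\<bar>t'\<bar> + nrm y0 + nrm y1 + nrm (u0 - P) + nrm (u1 - P) + D \<le> eps"
  shows "nrm (H t' y0 y1 u0 u1 - H t z0 z1 x0 x1) \<le>
    \<Lambda> * \<bar>t' - t\<bar> + L0 * nrm (y0 - z0) + L1 * nrm (y1 - z1) + C0 * nrm (u0 - x0) + C1 * nrm (u1 - x1)"
proof -
  have D0: "D \<ge> 0" using D nb(6) by (simp add: add_nonneg_nonneg)
  have X: "(t, z0, z1, x0, x1) \<in> Nbhd nrm P eps" using hX D0 by (simp add: Nbhd_def)
  have Y: "(t', y0, y1, u0, u1) \<in> Nbhd nrm P eps" using hY D0 by (simp add: Nbhd_def)
  have "\<bar>t'\<bar> \<le> \<bar>t\<bar> + \<bar>t' - t\<bar>" by simp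
  then have M1: "(t', z0, z1, x0, x1) \<in> Nbhd nrm P eps"
    using hX D nb(6)[of "y0 - z0"] nb(6)[of "y1 - z1"] nb(6)[of "u0 - x0"] nb(6)[of "u1 - x1"]
    by (simp add: Nbhd_def)
  have "nrm (x0 - P) \<le> nrm (u0 - P) + nrm (u0 - x0)" "nrm (x1 - P) \<le> nrm (u1 - P) + nrm (u1 - x1)"
    using nb(7)[of x0 P u0] nb(7)[of x1 P u1] nb(3)[of x0 u0] nb(3)[of x1 u1] by (simp_all add: nb(3))
  then have M2: "(t', y0, y1, x0, x1) \<in> Nbhd nrm P eps"
    using hY D nb(6)[of "y0 - z0"] nb(6)[of "y1 - z1"] nb(6)[of "u0 - x0"] nb(6)[of "u1 - x1"] abs_ge_zero[of "t' - t"]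
    by (simp add: Nbhd_def)
  have e1: "nrm (H t' y0 y1 u0 u1 - H t' y0 y1 x0 x1) \<le> C0 * nrm (u0 - x0) + C1 * nrm (u1 - x1)"
    by (rule Lip_x[OF M2 Y])
  have e2: "nrm (H t' y0 y1 x0 x1 - H t' z0 z1 x0 x1) \<le> L0 * nrm (y0 - z0) + L1 * nrm (y1 - z1)"
    by (rule Lip_z[OF M1 M2])
  have e3: "nrm (H t' z0 z1 x0 x1 - H t z0 z1 x0 x1) \<le> \<Lambda> * \<bar>t' - t\<bar>"
    by (rule Lip_t[OF X M1])
  have "nrm (H t' y0 y1 u0 u1 - H t z0 z1 x0 x1) \<le> nrm (H t' y0 y1 u0 u1 - H t' y0 y1 x0 x1)
     + nrm (H t' y0 y1 x0 x1 - H t z0 z1 x0 x1)" by (rule nb(7))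
  also have "nrm (H t' y0 y1 x0 x1 - H t z0 z1 x0 x1) \<le> nrm (H t' y0 y1 x0 x1 - H t' z0 z1 x0 x1)
     + nrm (H t' z0 z1 x0 x1 - H t z0 z1 x0 x1)" by (rule nb(7))
  finally show ?thesis using e1 e2 e3 by linarith
qed

lemma stepB':
  assumes "nn (X - Pc P) + nn (Y - X) \<le> eps" "nn (Y - Pc P) + nn (Y - X) \<le> eps"
  shows "nrm (G Y - G X) \<le> ww (Y - X)"
proof -
  obtain t z0 z1 x0 x1 where X: "X = (t, z0, z1, x0, x1)" by (cases X) auto
  obtain t' y0 y1 u0 u1 where Y: "Y = (t', y0, y1, u0, u1)" by (cases Y) auto
  show ?thesis
    using assms stepB[OF refl, of t z0 z1 x0 x1 t' y0 y1 u0 u1]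
    by (simp add: X Y n5_def w5_def Pc_def GG_def)
qed

end

context HL begin

lemma seg_lip:
  assumes hx: "nn (X - Pc P) \<le> r * eps" and hy: "nn (Y - Pc P) \<le> r * eps"
    and r0: "0 \<le> r" and r1: "r < 1" and eps: "eps > 0"
  shows "nrm (G Y - G X) \<le> ww (Y - X)"
proof -
  define seg where "seg l = X + l *\<^sub>R (Y - X)" for l :: real
  have segP: "nn (seg l - Pc P) \<le> r * eps" if l: "0 \<le> l" "l \<le> 1" for l
  proof -
    have "seg l - Pc P = (1 - l) *\<^sub>R (X - Pc P) + l *\<^sub>R (Y - Pc P)"
      by (simp add: seg_def algebra_simps)
    then have "nn (seg l - Pc P) \<le> nn ((1 - l) *\<^sub>R (X - Pc P)) + nn (l *\<^sub>R (Y - Pc P))"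
      using n5_add by simp
    also have "\<dots> = (1 - l) * nn (X - Pc P) + l * nn (Y - Pc P)" using l by (simp add: n5_scale)
    also have "\<dots> \<le> (1 - l) * (r * eps) + l * (r * eps)"
      using l hx hy by (intro add_mono mult_left_mono) auto
    also have "\<dots> = r * eps" by (simp add: algebra_simps)
    finally show ?thesis .
  qed
  have segd: "seg l' - seg l = (l' - l) *\<^sub>R (Y - X)" for l l'
    by (simp add: seg_def algebra_simps)
  have pos: "(1 - r) * eps > 0" using r1 eps by simp
  obtain m :: nat where m: "nn (Y - X) / ((1 - r) * eps) < real m" using reals_Archimedean2 by blast
  have m0: "m > 0" using m n5_nonneg[of "Y - X"] pos
    by (metis divide_nonneg_pos gr0I not_less of_nat_0)
  have mstep: "nn (Y - X) / real m \<le> (1 - r) * eps"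
    using m m0 pos by (simp add: field_simps)
  have ind: "k \<le> m \<Longrightarrow> nrm (G (seg (real k / real m)) - G X) \<le> real k / real m * ww (Y - X)" for k
  proof (induction k)
    case 0 then show ?case by (simp add: seg_def nb(1))
  next
    case (Suc k)
    let ?a = "real k / real m" and ?b = "real (Suc k) / real m"
    have a: "0 \<le> ?a" "?a \<le> 1" and b: "0 \<le> ?b" "?b \<le> 1" using Suc.prems m0 by auto
    have ba: "?b - ?a = 1 / real m" using m0 by (simp add: field_simps)
    have dd: "nn (seg ?b - seg ?a) = nn (Y - X) / real m"
      unfolding segd n5_scale ba using m0 by simp
    have w: "ww (seg ?b - seg ?a) = ww (Y - X) / real m"
      unfolding segd w5_scale ba using m0 by simp
    have "nrm (G (seg ?b) - G (seg ?a)) \<le> ww (seg ?b - seg ?a)"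
    proof (rule stepB')
      have re: "r * eps + (1 - r) * eps = eps" by (simp add: algebra_simps)
      show "nn (seg ?a - Pc P) + nn (seg ?b - seg ?a) \<le> eps"
        using segP[OF a] dd mstep re by linarith
      show "nn (seg ?b - Pc P) + nn (seg ?b - seg ?a) \<le> eps"
        using segP[OF b] dd mstep re by linarith
    qed
    moreover have "nrm (G (seg ?a) - G X) \<le> ?a * ww (Y - X)" using Suc by simp
    moreover have "nrm (G (seg ?b) - G X) \<le> nrm (G (seg ?b) - G (seg ?a)) + nrm (G (seg ?a) - G X)"
      by (rule nb(7))
    moreover have "?a * ww (Y - X) + ww (Y - X) / real m = ?b * ww (Y - X)"
      using m0 by (simp add: field_simps)
    ultimately show ?case using w by linarith
  qed
  have "seg (real m / real m) = Y" using m0 by (simp add: seg_def)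
  then show ?thesis using ind[of m] m0 by simp
qed

lemma H_lip:
  assumes X: "X \<in> Nbhd nrm P eps" and Y: "Y \<in> Nbhd nrm P eps" and eps: "eps > 0"
  shows "nrm (G Y - G X) \<le> ww (Y - X)"
proof -
  define sc where "sc r Z = Pc P + r *\<^sub>R (Z - Pc P)" for r Z
  have b: "nrm (G (sc r Y) - G (sc r X)) \<le> ww (Y - X)" if r: "0 < r" "r < 1" for r
  proof -
    have "nrm (G (sc r Y) - G (sc r X)) \<le> ww (sc r Y - sc r X)"
    proof (rule seg_lip[where r = r])
      show "nn (sc r X - Pc P) \<le> r * eps" using X r by (simp add: sc_def n5_scale mem_Nbhd)
      show "nn (sc r Y - Pc P) \<le> r * eps" using Y r by (simp add: sc_def n5_scale mem_Nbhd)
    qed (use r eps in auto)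
    also have "sc r Y - sc r X = r *\<^sub>R (Y - X)" by (simp add: sc_def algebra_simps)
    also have "ww (r *\<^sub>R (Y - X)) \<le> ww (Y - X)"
      using r w5_nonneg[of "Y - X"] by (simp add: w5_scale mult_left_le_one_le)
    finally show ?thesis .
  qed
  have lim: "((\<lambda>r. G (sc r Z)) \<longlongrightarrow> G Z) (at_left 1)" if Z: "Z \<in> Nbhd nrm P eps" for Z
  proof -
    have "isCont G Z"
      using H_cont U_open N_sub Z continuous_on_eq_continuous_at unfolding GG_def by blast
    moreover have "((\<lambda>r. sc r Z) \<longlongrightarrow> Z) (at_left 1)"
    proof -
      have "((\<lambda>r. Pc P + r *\<^sub>R (Z - Pc P)) \<longlongrightarrow> Pc P + 1 *\<^sub>R (Z - Pc P)) (at_left 1)"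
        by (intro tendsto_intros)
      then show ?thesis by (simp add: sc_def)
    qed
    ultimately show ?thesis by (rule isCont_tendsto_compose)
  qed
  have "((\<lambda>r. nrm (G (sc r Y) - G (sc r X))) \<longlongrightarrow> nrm (G Y - G X)) (at_left 1)"
    by (rule nrm_tendsto[OF norm tendsto_diff[OF lim[OF Y] lim[OF X]]])
  moreover have "\<forall>\<^sub>F r in at_left 1. nrm (G (sc r Y) - G (sc r X)) \<le> ww (Y - X)"
  proof -
    have ev: "\<forall>\<^sub>F r in at_left (1::real). r \<in> {0<..<1}" by (rule eventually_at_left_real) simp
    show ?thesis using ev by (rule eventually_mono) (use b in auto)
  qed
  ultimately show ?thesis
    by (rule tendsto_upperbound) simp
qed

end
theorem lemma4p5:
  fixes nrm :: "real^'n \<Rightarrow> real"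
    and H :: "real \<Rightarrow> real^'n \<Rightarrow> real^'n \<Rightarrow> real^'n \<Rightarrow> real^'n \<Rightarrow> real^'n"
    and U :: "(real \<times> (real^'n) \<times> (real^'n) \<times> (real^'n) \<times> (real^'n)) set"
    and P :: "real^'n" and i1 :: 'n
    and eps \<Lambda> L0 L1 C0 C1 mu delta :: real
    and W W' :: "real \<Rightarrow> real^'n"
  assumes norm: "is_norm nrm"
    and U_open: "open U"
    and H_cont: "continuous_on U (\<lambda>(t, z0, z1, x0, x1). H t z0 z1 x0 x1)"
    and P_fix: "P = H 0 0 0 P P"
    and P1: "\<bar>P $ i1\<bar> \<le> 1"
    and eps_pos: "eps > 0"
    and N_sub: "Nbhd nrm P eps \<subseteq> U"
    and consts_nonneg: "\<Lambda> \<ge> 0" "L0 \<ge> 0" "L1 \<ge> 0" "C0 \<ge> 0" "C1 \<ge> 0"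
    and Lip_t: "\<And>t s z0 z1 x0 x1. (t, z0, z1, x0, x1) \<in> Nbhd nrm P eps \<Longrightarrow>
        (s, z0, z1, x0, x1) \<in> Nbhd nrm P eps \<Longrightarrow>
        nrm (H s z0 z1 x0 x1 - H t z0 z1 x0 x1) \<le> \<Lambda> * \<bar>s - t\<bar>"
    and Lip_z: "\<And>t z0 z1 y0 y1 x0 x1. (t, z0, z1, x0, x1) \<in> Nbhd nrm P eps \<Longrightarrow>
        (t, y0, y1, x0, x1) \<in> Nbhd nrm P eps \<Longrightarrow>
        nrm (H t y0 y1 x0 x1 - H t z0 z1 x0 x1) \<le> L0 * nrm (y0 - z0) + L1 * nrm (y1 - z1)"
    and Lip_x: "\<And>t z0 z1 x0 x1 y0 y1. (t, z0, z1, x0, x1) \<in> Nbhd nrm P eps \<Longrightarrow>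
        (t, z0, z1, y0, y1) \<in> Nbhd nrm P eps \<Longrightarrow>
        nrm (H t z0 z1 y0 y1 - H t z0 z1 x0 x1) \<le> C0 * nrm (y0 - x0) + C1 * nrm (y1 - x1)"
    and C_lt: "C0 + C1 < 1"
    and h1_bound: "\<And>t z0 z1 x0 x1. (t, z0, z1, x0, x1) \<in> Nbhd nrm P eps \<Longrightarrow>
        \<bar>H t z0 z1 x0 x1 $ i1\<bar> \<le> 1"
    and mu_ge: "mu \<ge> (\<Lambda> + (L0 + L1) *
        (SUP X\<in>Nbhd nrm P eps. nrm (case X of (t, z0, z1, x0, x1) \<Rightarrow> H t z0 z1 x0 x1)))
        / (1 - C0 - C1)"
    and delta_pos: "delta > 0"
    and W_C1: "C1_on delta W W'"
    and w1_range: "\<And>t. t \<in> {-delta..delta} \<Longrightarrow> W t $ i1 \<in> {-delta..delta}"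
    and W_eq: "\<And>t. t \<in> {-delta..delta} \<Longrightarrow>
        W' t = H t (W t) (W (W t $ i1)) (W' t) (W' (W t $ i1))"
    and W0: "W 0 = 0" and W'0: "W' 0 = P"
    and W_in: "\<And>t. t \<in> {-delta..delta} \<Longrightarrow>
        (t, W t, W (W t $ i1), W' t, W' (W t $ i1)) \<in> Nbhd nrm P eps"
  shows "classC nrm P eps
           (SUP X\<in>Nbhd nrm P eps. nrm (case X of (t, z0, z1, x0, x1) \<Rightarrow> H t z0 z1 x0 x1))
           mu i1 delta W"
proof -
  interpret HL nrm H U P eps \<Lambda> L0 L1 C0 C1
    by unfold_locales (use assms in auto)
  let ?I = "{-delta..delta}"
  let ?N = "Nbhd nrm P eps"
  define al where "al = (SUP X\<in>?N. nrm (case X of (t, z0, z1, x0, x1) \<Rightarrow> H t z0 z1 x0 x1))"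
  have Geq: "G X = (case X of (t, z0, z1, x0, x1) \<Rightarrow> H t z0 z1 x0 x1)" for X
    by (simp add: GG_def)
  have al_eq: "al = (SUP X\<in>?N. nrm (G X))" by (simp add: al_def Geq)
  have PcN: "Pc P \<in> ?N" using eps_pos by (simp add: mem_Nbhd n5_def zero_prod_def nb(1))
  have GP: "G (Pc P) = P" using P_fix by (simp add: GG_def Pc_def)
  define Kc where "Kc = \<Lambda> + L0 + L1 + C0 + C1"
  have wle: "ww V \<le> Kc * nn V" for V
  proof -
    obtain t a b c d where V: "V = (t, a, b, c, d)" by (cases V) auto
    have "\<Lambda> * \<bar>t\<bar> \<le> Kc * \<bar>t\<bar>" "L0 * nrm a \<le> Kc * nrm a" "L1 * nrm b \<le> Kc * nrm b"
      "C0 * nrm c \<le> Kc * nrm c" "C1 * nrm d \<le> Kc * nrm d"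
      using consts_nonneg nb(6) by (intro mult_right_mono; simp add: Kc_def)+
    then show ?thesis by (simp add: V w5_def n5_def algebra_simps)
  qed
  have Gbd: "nrm (G X) \<le> nrm P + Kc * eps" if X: "X \<in> ?N" for X
  proof -
    have "nrm (G X - G (Pc P)) \<le> ww (X - Pc P)" by (rule H_lip[OF PcN X eps_pos])
    also have "\<dots> \<le> Kc * nn (X - Pc P)" by (rule wle)
    also have "\<dots> \<le> Kc * eps" using X consts_nonneg by (intro mult_left_mono) (auto simp: mem_Nbhd Kc_def)
    finally have "nrm (G X - P) \<le> Kc * eps" using GP by simp
    moreover have "nrm (G X) \<le> nrm (G X - P) + nrm (P - 0)" using nb(7)[of "G X" 0 P] by simp
    ultimately show ?thesis by simp
  qed
  have bdd: "bdd_above ((\<lambda>X. nrm (G X)) ` ?N)"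
    using Gbd by (intro bdd_aboveI2) blast
  have al_ub: "nrm (G X) \<le> al" if "X \<in> ?N" for X
    unfolding al_eq by (rule cSUP_upper[OF that bdd])
  have al0: "al \<ge> 0" using al_ub[OF PcN] nb(6) by (meson order_trans)
  define V where "V u = (u, W u, W (W u $ i1), W' u, W' (W u $ i1))" for u
  have VN: "u \<in> ?I \<Longrightarrow> V u \<in> ?N" for u using W_in by (simp add: V_def)
  have GV: "u \<in> ?I \<Longrightarrow> G (V u) = W' u" for u using W_eq by (simp add: V_def GG_def)
  have W'bd: "u \<in> ?I \<Longrightarrow> nrm (W' u) \<le> al" for u using al_ub[OF VN] GV by metis
  have der: "\<And>u. u \<in> ?I \<Longrightarrow> (W has_vector_derivative W' u) (at u within ?I)"
    using W_C1 by (simp add: C1_on_def)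
  have w1lip: "\<bar>W t $ i1 - W s $ i1\<bar> \<le> \<bar>t - s\<bar>" if "t \<in> ?I" "s \<in> ?I" for t s
  proof -
    have "\<bar>W t $ i1 - W s $ i1\<bar> \<le> 1 * \<bar>t - s\<bar>"
    proof (rule real_mvt_bound[where f = "\<lambda>u. W u $ i1" and f' = "\<lambda>u. W' u $ i1"])
      fix u assume u: "u \<in> ?I"
      show "((\<lambda>u. W u $ i1) has_vector_derivative W' u $ i1) (at u within ?I)"
        by (rule bounded_linear.has_vector_derivative[OF bounded_linear_vec_nth der[OF u]])
      show "\<bar>W' u $ i1\<bar> \<le> 1" using h1_bound[OF W_in[OF u]] W_eq[OF u] by simp
    qed (use that in auto)
    then show ?thesis by simp
  qed
  have Wlip: "nrm (W t - W s) \<le> al * \<bar>t - s\<bar>" if "t \<in> ?I" "s \<in> ?I" for t s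
    by (rule nrm_mvt[OF norm der W'bd]) (use that in auto)
  have C1pos: "1 - C0 - C1 > 0" using C_lt by simp
  define A0 where "A0 = \<Lambda> + (L0 + L1) * al"
  have W'lip: "nrm (W' t - W' s) \<le> mu * \<bar>t - s\<bar>" if ts: "t \<in> ?I" "s \<in> ?I" for t s
  proof -
    define h where "h = \<bar>t - s\<bar>"
    define Q where "Q = {p. fst p \<in> ?I \<and> snd p \<in> ?I \<and> \<bar>fst p - snd p\<bar> \<le> h}"
    define q where "q = (SUP p\<in>Q. nrm (W' (fst p) - W' (snd p)))"
    have tsQ: "(t, s) \<in> Q" using ts by (simp add: Q_def h_def)
    have dbd: "nrm (W' a - W' b) \<le> 2 * al" if "a \<in> ?I" "b \<in> ?I" for a b
    proof -
      have "nrm (W' a - W' b) \<le> nrm (W' a - 0) + nrm (0 - W' b)" by (rule nb(7))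
      then show ?thesis using W'bd[OF that(1)] W'bd[OF that(2)] nb(2)[of "W' b"] by simp
    qed
    have bddQ: "bdd_above ((\<lambda>p. nrm (W' (fst p) - W' (snd p))) ` Q)"
      using dbd by (intro bdd_aboveI2[where M = "2 * al"]) (auto simp: Q_def)
    have qub: "nrm (W' (fst p) - W' (snd p)) \<le> q" if "p \<in> Q" for p
      unfolding q_def by (rule cSUP_upper[OF that bddQ])
    have each: "nrm (W' (fst p) - W' (snd p)) \<le> A0 * h + (C0 + C1) * q" if p: "p \<in> Q" for p
    proof -
      obtain a b where ab: "p = (a, b)" by (cases p) auto
      have a: "a \<in> ?I" and b: "b \<in> ?I" and abh: "\<bar>a - b\<bar> \<le> h" using p by (auto simp: ab Q_def)
      let ?a1 = "W a $ i1" and ?b1 = "W b $ i1"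
      have a1: "?a1 \<in> ?I" and b1: "?b1 \<in> ?I" using w1_range a b by auto
      have abh1: "\<bar>?a1 - ?b1\<bar> \<le> h" using w1lip[OF a b] abh by simp
      have "nrm (G (V a) - G (V b)) \<le> ww (V a - V b)" by (rule H_lip[OF VN[OF b] VN[OF a] eps_pos])
      then have main: "nrm (W' a - W' b) \<le> \<Lambda> * \<bar>a - b\<bar> + L0 * nrm (W a - W b)
          + L1 * nrm (W ?a1 - W ?b1) + C0 * nrm (W' a - W' b) + C1 * nrm (W' ?a1 - W' ?b1)"
        using GV[OF a] GV[OF b] by (simp add: V_def w5_def)
      have e1: "\<Lambda> * \<bar>a - b\<bar> \<le> \<Lambda> * h" using abh consts_nonneg by (simp add: mult_left_mono)
      have "nrm (W a - W b) \<le> al * h" using Wlip[OF a b] abh al0 by (meson mult_left_mono order_trans)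
      then have e2: "L0 * nrm (W a - W b) \<le> L0 * (al * h)" using consts_nonneg by (simp add: mult_left_mono)
      have "nrm (W ?a1 - W ?b1) \<le> al * h" using Wlip[OF a1 b1] abh1 al0 by (meson mult_left_mono order_trans)
      then have e3: "L1 * nrm (W ?a1 - W ?b1) \<le> L1 * (al * h)" using consts_nonneg by (simp add: mult_left_mono)
      have "nrm (W' a - W' b) \<le> q" using qub[OF p] ab by simp
      then have e4: "C0 * nrm (W' a - W' b) \<le> C0 * q" using consts_nonneg by (simp add: mult_left_mono)
      have "nrm (W' ?a1 - W' ?b1) \<le> q" using qub[of "(?a1, ?b1)"] a1 b1 abh1 by (simp add: Q_def)
      then have e5: "C1 * nrm (W' ?a1 - W' ?b1) \<le> C1 * q" using consts_nonneg by (simp add: mult_left_mono)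
      have "A0 * h + (C0 + C1) * q = \<Lambda> * h + L0 * (al * h) + L1 * (al * h) + C0 * q + C1 * q"
        by (simp add: A0_def algebra_simps)
      then show ?thesis using main e1 e2 e3 e4 e5 ab by simp
    qed
    have "q \<le> A0 * h + (C0 + C1) * q"
      unfolding q_def using tsQ each by (intro cSUP_least) (auto simp: q_def)
    then have "q * (1 - C0 - C1) \<le> A0 * h" by (simp add: algebra_simps)
    then have "q \<le> A0 * h / (1 - C0 - C1)" using C1pos by (simp add: field_simps)
    also have "\<dots> = A0 / (1 - C0 - C1) * h" by simp
    also have "\<dots> \<le> mu * h" using mu_ge h_def al_def A0_def by (intro mult_right_mono) (simp_all add: al_def)
    finally have "q \<le> mu * h" .
    then show ?thesis using qub[OF tsQ] h_def by simp
  qed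
  show ?thesis
    unfolding classC_def al_def[symmetric]
  proof (intro exI[of _ W'] conjI ballI)
    show "C1_on delta W W'" by (rule W_C1)
    show "W 0 = 0" "W' 0 = P" by (rule W0, rule W'0)
    fix t assume t: "t \<in> ?I"
    have z: "0 \<in> ?I" using delta_pos by simp
    show "\<bar>W t $ i1\<bar> \<le> \<bar>t\<bar>" using w1lip[OF t z] W0 by simp
    show "(t, W t, W (W t $ i1), W' t, W' (W t $ i1)) \<in> ?N" by (rule W_in[OF t])
    fix s assume s: "s \<in> ?I"
    show "nrm (W t - W s) \<le> al * \<bar>t - s\<bar>" by (rule Wlip[OF t s])
    show "\<bar>W t $ i1 - W s $ i1\<bar> \<le> \<bar>t - s\<bar>" by (rule w1lip[OF t s])
    show "nrm (W' t - W' s) \<le> mu * \<bar>t - s\<bar>" by (rule W'lip[OF t s])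
  qed
qed

end
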